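(* Let $(G,c)$ be a metric TSP instance with $n\ge 3$ cities and let $T^*$ be a shortest tour. Then every 2-optimal tour $T'$ satisfies $c(T') \le \sqrt{n/2}\, c(T^* )$.
   Context: A metric TSP instance with $n$ cities consists of a complete undirected graph $G$ on $n$ vertices together with $c: E(G)\to\mathbb{R}_{\ge 0}$ satisfying the triangle inequality $c(x,y)+c(y,z)\ge c(x,z)$. A tour is a cycle containing all vertices; its length is the sum of its edge lengths. Tours are regarded as oriented cycles. A tour is 2-optimal if for all pairs of edges $(a,b),(x,y)$ of the oriented tour, $c(a,x)+c(b,y)\ge c(a,b)+c(x,y)$. *)

theory Defs
  imports Complex_Main
begin

text \<open>A metric TSP instance on the finite city set V: edge lengths c on pairs of
distinct cities, nonnegative, symmetric, satisfying the triangle inequality.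
Values c x x (loops) play no role.\<close>
definition metric_tsp :: "'a set \<Rightarrow> ('a \<Rightarrow> 'a \<Rightarrow> real) \<Rightarrow> bool" where
  "metric_tsp V c \<longleftrightarrow> finite V \<and>
     (\<forall>x\<in>V. \<forall>y\<in>V. x \<noteq> y \<longrightarrow> c x y \<ge> 0 \<and> c x y = c y x) \<and>
     (\<forall>x\<in>V. \<forall>y\<in>V. \<forall>z\<in>V. x \<noteq> y \<and> y \<noteq> z \<and> x \<noteq> z \<longrightarrow> c x y + c y z \<ge> c x z)"

text \<open>An (oriented) tour is a list enumerating all cities exactly once,
read cyclically: T!0, T!1, ..., T!(n-1), T!0.\<close>
definition is_tour :: "'a set \<Rightarrow> 'a list \<Rightarrow> bool" where
  "is_tour V T \<longleftrightarrow> distinct T \<and> set T = V"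

definition tour_length :: "('a \<Rightarrow> 'a \<Rightarrow> real) \<Rightarrow> 'a list \<Rightarrow> real" where
  "tour_length c T = (\<Sum>i<length T. c (T ! i) (T ! ((i + 1) mod length T)))"

definition two_optimal :: "('a \<Rightarrow> 'a \<Rightarrow> real) \<Rightarrow> 'a list \<Rightarrow> bool" where
  "two_optimal c T \<longleftrightarrow>
     (\<forall>i<length T. \<forall>j<length T. i \<noteq> j \<longrightarrow>
        (let a = T ! i; b = T ! ((i + 1) mod length T);
             x = T ! j; y = T ! ((j + 1) mod length T)
         in c a x + c b y \<ge> c a b + c x y))"

end

theory Submission
  imports Defs "HOL-Analysis.Analysis"
begin


definition ramp2 :: "real \<Rightarrow> real" where "ramp2 x = (max 0 x)^2 / 2"

lemma ramp2_deriv: "(ramp2 has_real_derivative (max 0 x)) (at x)"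
proof -
  consider "x > 0" | "x < 0" | "x = 0" by linarith
  then show ?thesis
  proof cases
    case 1
    have "((\<lambda>y. y^2/2) has_real_derivative x) (at x)"
      by (auto intro!: derivative_eq_intros)
    then have "(ramp2 has_real_derivative x) (at x)"
      by (rule has_field_derivative_transform_within_open[where S="{0<..}"])
         (use 1 in \<open>auto simp: ramp2_def max_def\<close>)
    then show ?thesis using 1 by simp
  next
    case 2
    have "((\<lambda>y. 0) has_real_derivative 0) (at x)"
      by (auto intro!: derivative_eq_intros)
    then have "(ramp2 has_real_derivative 0) (at x)"
      by (rule has_field_derivative_transform_within_open[where S="{..<0}"])
         (use 2 in \<open>auto simp: ramp2_def max_def\<close>)
    then show ?thesis using 2 by simp
  next
    case 3
    have "((\<lambda>y. (ramp2 y - ramp2 0) / (y - 0)) \<longlongrightarrow> 0) (at 0)"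
    proof -
      have "((\<lambda>y::real. max 0 y / 2) \<longlongrightarrow> max 0 0 / 2) (at (0::real))"
        by (intro tendsto_intros) auto
      then have "((\<lambda>y::real. max 0 y / 2) \<longlongrightarrow> 0) (at (0::real))" by simp
      moreover have "\<forall>\<^sub>F y in at 0. max 0 y / 2 = (ramp2 y - ramp2 0) / (y - 0)"
        unfolding eventually_at_filter
        by (auto simp: ramp2_def max_def power2_eq_square)
      ultimately show ?thesis by (rule tendsto_cong[THEN iffD1, rotated])
    qed
    then show ?thesis using 3 by (simp add: has_field_derivative_iff)
  qed
qed

definition tentA :: "real \<Rightarrow> real \<Rightarrow> real" where
  "tentA r x = ramp2 (x + r) - 2 * ramp2 x + ramp2 (x - r)"
definition tent :: "real \<Rightarrow> real \<Rightarrow> real" where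
  "tent r x = max 0 (x + r) - 2 * max 0 x + max 0 (x - r)"

lemma tent_eq: "0 \<le> r \<Longrightarrow> tent r x = max 0 (r - \<bar>x\<bar>)"
  unfolding tent_def by (auto simp: max_def abs_if)

lemma tentA_deriv: "(tentA r has_real_derivative tent r x) (at x)"
  unfolding tentA_def tent_def
  by (auto intro!: derivative_eq_intros ramp2_deriv[THEN DERIV_chain2])

lemma tentA_big: "0 \<le> r \<Longrightarrow> r \<le> x \<Longrightarrow> tentA r x = r^2"
  unfolding tentA_def ramp2_def by (simp add: max_def power2_eq_square field_simps)

lemma tentA_small: "0 \<le> r \<Longrightarrow> x \<le> -r \<Longrightarrow> tentA r x = 0"
  unfolding tentA_def ramp2_def by (cases "r = 0") (auto simp add: max_def)

definition WA :: "real \<Rightarrow> real \<Rightarrow> real \<Rightarrow> real \<Rightarrow> real" where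
  "WA L a r s = tentA r (s - a + L) + tentA r (s - a) + tentA r (s - a - L)"
definition W :: "real \<Rightarrow> real \<Rightarrow> real \<Rightarrow> real \<Rightarrow> real" where
  "W L a r s = tent r (s - a + L) + tent r (s - a) + tent r (s - a - L)"

lemma WA_deriv: "(WA L a r has_real_derivative W L a r s) (at s)"
  unfolding WA_def W_def
  by (auto intro!: derivative_eq_intros tentA_deriv[THEN DERIV_chain2])

lemma W_integral:
  assumes "0 \<le> a" "a \<le> L" "0 \<le> r" "2 * r \<le> L"
  shows "(W L a r has_integral r^2) {0..L}"
proof -
  have "(W L a r has_integral (WA L a r L - WA L a r 0)) {0..L}"
    apply (rule fundamental_theorem_of_calculus)
    using assms apply simp
    using WA_deriv has_real_derivative_iff_has_vector_derivative
      has_vector_derivative_at_within by blast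
  moreover have "WA L a r L - WA L a r 0 = r^2"
    unfolding WA_def using assms
    by (simp add: tentA_big tentA_small)
  ultimately show ?thesis by simp
qed

definition cd :: "real \<Rightarrow> real \<Rightarrow> real \<Rightarrow> real" where
  "cd L x y = min \<bar>x - y\<bar> (L - \<bar>x - y\<bar>)"

lemma W_eq:
  assumes "0 \<le> a" "a \<le> L" "0 \<le> s" "s \<le> L" "0 \<le> r" "2 * r \<le> L"
  shows "W L a r s = max 0 (r - cd L s a)"
  unfolding W_def cd_def using assms by (simp add: tent_eq max_def abs_if min_def)

lemma line_pack:
  fixes x \<rho> :: "'i \<Rightarrow> real"
  assumes "finite S" "\<forall>i\<in>S. 0 \<le> \<rho> i"
    "\<forall>i\<in>S. \<forall>j\<in>S. i \<noteq> j \<longrightarrow> \<rho> i + \<rho> j \<le> \<bar>x i - x j\<bar>"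
  shows "S \<noteq> {} \<longrightarrow> (\<exists>i0\<in>S. \<exists>j0\<in>S. (\<forall>k\<in>S. x i0 \<le> x k \<and> x k \<le> x j0) \<and>
           (\<Sum>k\<in>S. 2 * \<rho> k) \<le> x j0 - x i0 + \<rho> i0 + \<rho> j0)"
  using assms
proof (induction S rule: finite_ranking_induct[where f = x])
  case empty
  then show ?case by simp
next
  case (insert t S)
  show ?case
  proof (cases "t \<in> S")
    case True
    then have "insert t S = S" by blast
    then show ?thesis using insert.IH insert.prems by simp
  next
    case tS: False
  show ?thesis
  proof (cases "S = {}")
    case True
    then show ?thesis by auto
  next
    case False
    from insert.IH[OF _ ] insert.prems False obtain i0 j0 where
      ij: "i0 \<in> S" "j0 \<in> S" "\<forall>k\<in>S. x i0 \<le> x k \<and> x k \<le> x j0"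
      "(\<Sum>k\<in>S. 2 * \<rho> k) \<le> x j0 - x i0 + \<rho> i0 + \<rho> j0" by auto
    have "\<rho> j0 + \<rho> t \<le> \<bar>x j0 - x t\<bar>" using insert.prems ij tS by (metis insertCI)
    moreover have "x j0 \<le> x t" using insert.hyps ij by auto
    moreover have "(\<Sum>k\<in>insert t S. 2 * \<rho> k) = 2 * \<rho> t + (\<Sum>k\<in>S. 2 * \<rho> k)"
      using tS insert.hyps by simp
    ultimately have "(\<Sum>k\<in>insert t S. 2 * \<rho> k) \<le> x t - x i0 + \<rho> i0 + \<rho> t"
      using ij by linarith
    moreover have "\<forall>k\<in>insert t S. x i0 \<le> x k \<and> x k \<le> x t"
      using ij insert.hyps by force
    ultimately show ?thesis using ij by blast
  qed
  qed
qed

lemma circle_pack: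
  fixes x \<rho> :: "'i \<Rightarrow> real"
  assumes "finite I" "\<forall>i\<in>I. 0 \<le> \<rho> i \<and> 2 * \<rho> i \<le> L" "0 \<le> L"
    "\<forall>i\<in>I. \<forall>j\<in>I. i \<noteq> j \<longrightarrow> 0 < \<rho> i \<longrightarrow> 0 < \<rho> j \<longrightarrow> \<rho> i + \<rho> j \<le> cd L (x i) (x j)"
  shows "(\<Sum>i\<in>I. 2 * \<rho> i) \<le> L"
proof -
  define J where "J = {i\<in>I. 0 < \<rho> i}"
  have JI: "J \<subseteq> I" "finite J" using assms(1) by (auto simp: J_def)
  have eq: "(\<Sum>i\<in>I. 2 * \<rho> i) = (\<Sum>i\<in>J. 2 * \<rho> i)"
    by (rule sum.mono_neutral_right) (use assms(1,2) in \<open>auto simp: J_def\<close>)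
  show ?thesis
  proof (cases "J = {}")
    case True
    then show ?thesis using eq assms(3) by simp
  next
    case False
    have pk: "\<forall>i\<in>J. \<forall>j\<in>J. i \<noteq> j \<longrightarrow> \<rho> i + \<rho> j \<le> \<bar>x i - x j\<bar>"
      using assms(4) by (auto simp: J_def cd_def)
    from line_pack[OF JI(2) _ pk] False assms(2) JI(1) obtain i0 j0 where
      ij: "i0 \<in> J" "j0 \<in> J" "\<forall>k\<in>J. x i0 \<le> x k \<and> x k \<le> x j0"
      "(\<Sum>k\<in>J. 2 * \<rho> k) \<le> x j0 - x i0 + \<rho> i0 + \<rho> j0" by blast
    show ?thesis
    proof (cases "i0 = j0")
      case True
      have "2 * \<rho> j0 \<le> L" using ij(2) assms(2) JI(1) by blast
      then show ?thesis using ij eq True by simp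
    next
      case False
      have "\<rho> i0 + \<rho> j0 \<le> cd L (x i0) (x j0)" using assms(4) ij False by (auto simp: J_def)
      then have "\<rho> i0 + \<rho> j0 \<le> L - \<bar>x i0 - x j0\<bar>" by (simp add: cd_def)
      then show ?thesis using ij eq by auto
    qed
  qed
qed

lemma cd_tri:
  assumes "0 \<le> x" "x \<le> L" "0 \<le> y" "y \<le> L" "0 \<le> z" "z \<le> L"
  shows "cd L x z \<le> cd L y x + cd L y z"
  using assms unfolding cd_def by (simp add: min_def abs_if split: if_splits)

lemma cd_nonneg: "0 \<le> x \<Longrightarrow> x \<le> L \<Longrightarrow> 0 \<le> y \<Longrightarrow> y \<le> L \<Longrightarrow> 0 \<le> cd L x y"
  unfolding cd_def by (simp add: min_def abs_if)

lemma area_bound: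
  fixes a b r :: "nat \<Rightarrow> real" and n :: nat
  assumes L: "0 \<le> L" and a: "\<forall>i<n. 0 \<le> a i \<and> a i \<le> L"
    and r: "\<forall>i<n. 0 \<le> r i \<and> 2 * r i \<le> L"
    and pk: "\<forall>i<n. \<forall>j<n. i \<noteq> j \<longrightarrow> r i + r j \<le> cd L (a i) (a j) + cd L (b i) (b j)"
  shows "2 * (\<Sum>i<n. (r i)^2) \<le> L * L"
proof -
  have "((\<lambda>s. \<Sum>i<n. 2 * W L (a i) (r i) s) has_integral (\<Sum>i<n. 2 * (r i)^2)) {0..L}"
    apply (rule has_integral_sum)
     apply simp
    apply (rule has_integral_mult_right)
    apply (rule W_integral) using a r by auto
  moreover have "((\<lambda>s. L) has_integral L * L) {0..L}"
    using has_integral_const_real[of L 0 L] L by simp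
  moreover have "(\<Sum>i<n. 2 * W L (a i) (r i) s) \<le> L" if s: "s \<in> {0..L}" for s
  proof -
    define \<rho> where "\<rho> i = max 0 (r i - cd L s (a i))" for i
    have "(\<Sum>i<n. 2 * W L (a i) (r i) s) = (\<Sum>i<n. 2 * \<rho> i)"
      apply (rule sum.cong) using a r s by (auto simp: \<rho>_def W_eq)
    also have "\<dots> \<le> L"
    proof (rule circle_pack[where x = b])
      show "\<forall>i\<in>{..<n}. 0 \<le> \<rho> i \<and> 2 * \<rho> i \<le> L"
      proof
        fix i assume "i \<in> {..<n}"
        then have "0 \<le> cd L s (a i)" "2 * r i \<le> L" using cd_nonneg a r s by auto
        then show "0 \<le> \<rho> i \<and> 2 * \<rho> i \<le> L" unfolding \<rho>_def using L by (auto simp: max_def)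
      qed
      show "\<forall>i\<in>{..<n}. \<forall>j\<in>{..<n}. i \<noteq> j \<longrightarrow> 0 < \<rho> i \<longrightarrow> 0 < \<rho> j \<longrightarrow> \<rho> i + \<rho> j \<le> cd L (b i) (b j)"
      proof (intro ballI impI)
        fix i j assume ij: "i \<in> {..<n}" "j \<in> {..<n}" "i \<noteq> j" "0 < \<rho> i" "0 < \<rho> j"
        have "cd L (a i) (a j) \<le> cd L s (a i) + cd L s (a j)"
          using cd_tri a s ij by auto
        moreover have "r i + r j \<le> cd L (a i) (a j) + cd L (b i) (b j)" using pk ij by auto
        ultimately show "\<rho> i + \<rho> j \<le> cd L (b i) (b j)" using ij(4,5) unfolding \<rho>_def
          by (auto simp: max_def split: if_splits)
      qed
    qed (use L in auto)
    finally show ?thesis .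
  qed
  ultimately have "(\<Sum>i<n. 2 * (r i)^2) \<le> L * L" by (rule has_integral_le)
  then show ?thesis by (simp add: sum_distrib_left)
qed



definition Pw :: "('a \<Rightarrow> 'a \<Rightarrow> real) \<Rightarrow> 'a list \<Rightarrow> nat \<Rightarrow> real" where
  "Pw c w k = (\<Sum>m<k. c (w ! (m mod length w)) (w ! (Suc m mod length w)))"

lemma Pw_Suc: "Pw c w (Suc k) = Pw c w k + c (w ! (k mod length w)) (w ! (Suc k mod length w))"
  by (simp add: Pw_def)

lemma mod_neq: "p < q \<Longrightarrow> q - p < (n::nat) \<Longrightarrow> p mod n \<noteq> q mod n"
proof
  assume a: "p < q" "q - p < n" "p mod n = q mod n"
  then have "n dvd q - p" using mod_eq_dvd_iff_nat[of p q n] by simp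
  then have "n \<le> q - p" using a(1) by (simp add: dvd_imp_le)
  then show False using a(2) by simp
qed

lemma metric_tri:
  assumes "metric_tsp V c" "x \<in> V" "y \<in> V" "z \<in> V" "x \<noteq> y" "y \<noteq> z" "x \<noteq> z"
  shows "c x z \<le> c x y + c y z"
  using assms unfolding metric_tsp_def by blast

lemma metric_sym:
  assumes "metric_tsp V c" "x \<in> V" "y \<in> V" "x \<noteq> y"
  shows "c x y = c y x" "0 \<le> c x y"
  using assms unfolding metric_tsp_def by blast+

lemma path_le:
  assumes m: "metric_tsp V c" and d: "distinct w" and s: "set w = V" and n: "n = length w"
  shows "i < j \<Longrightarrow> j - i < n \<Longrightarrow> c (w!(i mod n)) (w!(j mod n)) \<le> Pw c w j - Pw c w i"
proof (induction j)
  case 0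
  then show ?case by simp
next
  case (Suc j)
  have npos: "0 < n" using Suc by linarith
  show ?case
  proof (cases "j = i")
    case True
    then show ?thesis by (simp add: Pw_Suc n)
  next
    case False
    then have ij: "i < j" "j - i < n" using Suc by auto
    have neq: "i mod n \<noteq> j mod n" "j mod n \<noteq> Suc j mod n" "i mod n \<noteq> Suc j mod n"
      using mod_neq[of i j n] mod_neq[of j "Suc j" n] mod_neq[of i "Suc j" n] ij Suc.prems npos by auto
    have lt: "i mod n < length w" "j mod n < length w" "Suc j mod n < length w" using npos n by auto
    have "c (w!(i mod n)) (w!(Suc j mod n)) \<le> c (w!(i mod n)) (w!(j mod n)) + c (w!(j mod n)) (w!(Suc j mod n))"
      apply (rule metric_tri[OF m])
      using lt neq d s by (auto simp: nth_eq_iff_index_eq)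
    also have "\<dots> \<le> Pw c w j - Pw c w i + c (w!(j mod n)) (w!(Suc j mod n))"
      using Suc.IH ij by simp
    also have "\<dots> = Pw c w (Suc j) - Pw c w i" by (simp add: Pw_Suc n)
    finally show ?thesis .
  qed
qed

lemma Pw_shift: "length w = n \<Longrightarrow> Pw c w (n + p) = Pw c w n + Pw c w p"
proof (induction p)
  case 0 then show ?case by (simp add: Pw_def)
next
  case (Suc p)
  have "Suc (n + p) = n + Suc p" by simp
  then have "Suc (n + p) mod n = Suc p mod n" by (metis mod_add_self1)
  then show ?case using Suc by (simp add: Pw_Suc)
qed

lemma Pw_mono:
  assumes m: "metric_tsp V c" and d: "distinct w" and s: "set w = V" and n: "length w \<ge> 2"
  shows "p \<le> q \<Longrightarrow> Pw c w p \<le> Pw c w q"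
proof (induction q)
  case 0 then show ?case by simp
next
  case (Suc q)
  have "0 < length w" using n by linarith
  then have lt: "q mod length w < length w" "Suc q mod length w < length w" by auto
  have "q mod length w \<noteq> Suc q mod length w" using mod_neq[of q "Suc q" "length w"] n by simp
  then have "w ! (q mod length w) \<in> V" "w ! (Suc q mod length w) \<in> V"
      "w ! (q mod length w) \<noteq> w ! (Suc q mod length w)"
    using lt d s by (auto simp: nth_eq_iff_index_eq)
  then have "0 \<le> c (w ! (q mod length w)) (w ! (Suc q mod length w))"
    using metric_sym(2)[OF m] by blast
  then show ?case using Suc by (cases "p = Suc q") (auto simp: Pw_Suc)
qed

lemma tour_length_Pw: "tour_length c w = Pw c w (length w)"
  unfolding tour_length_def Pw_def by (rule sum.cong) auto

lemma cd_sym: "cd L x y = cd L y x"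
  unfolding cd_def by (simp add: abs_minus_commute)

lemma pos_props:
  assumes m: "metric_tsp V c" and d: "distinct w" and s: "set w = V" and n: "length w = n"
    and n2: "2 \<le> n"
  shows "p < n \<Longrightarrow> 0 \<le> Pw c w p \<and> Pw c w p \<le> Pw c w n"
    and "p < n \<Longrightarrow> q < n \<Longrightarrow> p \<noteq> q \<Longrightarrow> c (w!p) (w!q) \<le> cd (Pw c w n) (Pw c w p) (Pw c w q)"
proof -
  have mono: "\<And>p q. p \<le> q \<Longrightarrow> Pw c w p \<le> Pw c w q"
    using Pw_mono[OF m d s] n n2 by auto
  show "p < n \<Longrightarrow> 0 \<le> Pw c w p \<and> Pw c w p \<le> Pw c w n"
    using mono[of 0 p] mono[of p n] by (simp add: Pw_def)
  have key: "c (w!p) (w!q) \<le> cd (Pw c w n) (Pw c w p) (Pw c w q)" if pq: "p < q" "q < n" for p q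
  proof -
    have "c (w!(p mod n)) (w!(q mod n)) \<le> Pw c w q - Pw c w p"
      using path_le[OF m d s n[symmetric], of p q] pq by simp
    then have A: "c (w!p) (w!q) \<le> Pw c w q - Pw c w p" using pq by simp
    have "c (w!(q mod n)) (w!((n+p) mod n)) \<le> Pw c w (n+p) - Pw c w q"
      using path_le[OF m d s n[symmetric], of q "n+p"] pq by simp
    then have "c (w!q) (w!p) \<le> Pw c w n + Pw c w p - Pw c w q"
      using pq Pw_shift[OF n, of c p] by simp
    moreover have "c (w!q) (w!p) = c (w!p) (w!q)"
      apply (rule metric_sym(1)[OF m, symmetric])
      using pq n s d by (auto simp: nth_eq_iff_index_eq)
    ultimately have B: "c (w!p) (w!q) \<le> Pw c w n - (Pw c w q - Pw c w p)" by simp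
    have "Pw c w p \<le> Pw c w q" using mono pq by simp
    then show ?thesis using A B unfolding cd_def by (simp add: abs_if min_def)
  qed
  show "p < n \<Longrightarrow> q < n \<Longrightarrow> p \<noteq> q \<Longrightarrow> c (w!p) (w!q) \<le> cd (Pw c w n) (Pw c w p) (Pw c w q)"
  proof -
    assume pq: "p < n" "q < n" "p \<noteq> q"
    show ?thesis
    proof (cases "p < q")
      case True then show ?thesis using key pq by simp
    next
      case False
      then have "q < p" using pq by simp
      then have "c (w!q) (w!p) \<le> cd (Pw c w n) (Pw c w q) (Pw c w p)" using key pq by simp
      moreover have "c (w!q) (w!p) = c (w!p) (w!q)"
        apply (rule metric_sym(1)[OF m, symmetric])
        using pq n s d by (auto simp: nth_eq_iff_index_eq)
      ultimately show ?thesis by (simp add: cd_sym)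
    qed
  qed
qed

lemma cauchy_sum:
  fixes r :: "nat \<Rightarrow> real"
  shows "(\<Sum>i<n. r i)^2 \<le> real n * (\<Sum>i<n. (r i)^2)"
proof -
  have "0 \<le> (\<Sum>i<n. \<Sum>j<n. (r i - r j)^2)" by (intro sum_nonneg) auto
  also have "\<dots> = (\<Sum>i<n. \<Sum>j<n. (r i)^2 + (r j)^2 - 2 * (r i * r j))"
    by (simp add: power2_diff mult.assoc)
  also have "\<dots> = 2 * (real n * (\<Sum>i<n. (r i)^2)) - 2 * (\<Sum>i<n. r i)^2"
    by (simp add: sum_subtractf sum.distrib sum_distrib_left sum_distrib_right power2_eq_square
        sum_product mult.commute)
  finally show ?thesis by simp
qed

lemma cd_half: "cd L x y \<le> L / 2"
  unfolding cd_def by (simp add: min_def)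

lemma sqrt_final:
  fixes S L :: real and n :: nat
  assumes "0 \<le> S" "0 \<le> L" "S^2 \<le> real n * Q" "2 * Q \<le> L * L"
  shows "S \<le> sqrt (real n / 2) * L"
proof -
  have "S^2 \<le> real n / 2 * L^2"
    using assms(3) mult_left_mono[OF assms(4), of "real n"]
    by (simp add: power2_eq_square field_simps)
  then have "sqrt (S^2) \<le> sqrt (real n / 2 * L^2)" by (rule real_sqrt_le_mono)
  moreover have "sqrt (real n / 2 * L^2) = sqrt (real n / 2) * sqrt (L^2)"
    by (rule real_sqrt_mult)
  moreover have "sqrt (L^2) = L" using assms(2) by simp
  ultimately show ?thesis using assms(1) by simp
qed

theorem mainTheorem3:
  fixes V :: "'a set" and c :: "'a \<Rightarrow> 'a \<Rightarrow> real" and Topt T' :: "'a list"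
  assumes "metric_tsp V c"
    and "card V \<ge> 3"
    and "is_tour V Topt"
    and "\<forall>T. is_tour V T \<longrightarrow> tour_length c Topt \<le> tour_length c T"
    and "is_tour V T'"
    and "two_optimal c T'"
  shows "tour_length c T' \<le> sqrt (real (card V) / 2) * tour_length c Topt"
proof -
  note m = assms(1)
  define n where "n = card V"
  define w where "w = Topt"
  define v where "v = T'"
  have dw: "distinct w" "set w = V" using assms(3) unfolding is_tour_def w_def by auto
  have dv: "distinct v" "set v = V" using assms(5) unfolding is_tour_def v_def by auto
  have lw: "length w = n" using distinct_card[OF dw(1)] dw(2) n_def by simp
  have lv: "length v = n" using distinct_card[OF dv(1)] dv(2) n_def by simp
  have n3: "3 \<le> n" using assms(2) n_def by simp
  define L where "L = Pw c w n"
  have TL: "tour_length c Topt = L" using tour_length_Pw[of c w] lw L_def w_def by simp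
  define idx where "idx u = (SOME p. p < n \<and> w!p = u)" for u
  have idx: "idx u < n \<and> w ! (idx u) = u" if "u \<in> V" for u
  proof -
    have "\<exists>p. p < n \<and> w!p = u" using that dw(2) lw by (auto simp: in_set_conv_nth)
    then show ?thesis unfolding idx_def by (rule someI_ex)
  qed
  note pp = pos_props[OF m dw lw, folded L_def]
  have L0: "0 \<le> L" using pp(1)[of 0] n3 by auto
  have cdle: "c u u' \<le> cd L (Pw c w (idx u)) (Pw c w (idx u'))" if "u \<in> V" "u' \<in> V" "u \<noteq> u'" for u u'
  proof -
    have "idx u \<noteq> idx u'" using idx[OF that(1)] idx[OF that(2)] that(3) by metis
    then have "c (w!idx u) (w!idx u') \<le> cd L (Pw c w (idx u)) (Pw c w (idx u'))"
      using pp(2)[of "idx u" "idx u'"] idx[OF that(1)] idx[OF that(2)] n3 by simp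
    then show ?thesis using idx[OF that(1)] idx[OF that(2)] by simp
  qed
  define r where "r i = c (v!i) (v!(Suc i mod n))" for i
  define a where "a i = Pw c w (idx (v!i))" for i
  define b where "b i = Pw c w (idx (v!(Suc i mod n)))" for i
  have vin: "v!i \<in> V" "v!(Suc i mod n) \<in> V" if "i < n" for i
    using that dv(2) lv n3 nth_mem[of "Suc i mod n" v] by auto
  have vne: "v!i \<noteq> v!(Suc i mod n)" if "i < n" for i
  proof -
    have "i \<noteq> Suc i mod n" using mod_neq[of i "Suc i" n] that n3 by simp
    then show ?thesis using that dv(1) lv n3 by (simp add: nth_eq_iff_index_eq)
  qed
  have "2 * (\<Sum>i<n. (r i)^2) \<le> L * L"
  proof (rule area_bound[where a = a and b = b])
    show "0 \<le> L" by (rule L0)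
    show "\<forall>i<n. 0 \<le> a i \<and> a i \<le> L"
    proof (intro allI impI)
      fix i assume i: "i < n"
      have "idx (v!i) < n" using idx vin(1)[OF i] by blast
      then show "0 \<le> a i \<and> a i \<le> L" using pp(1) n3 unfolding a_def by simp
    qed
    show "\<forall>i<n. 0 \<le> r i \<and> 2 * r i \<le> L"
    proof (intro allI impI)
      fix i assume i: "i < n"
      have "r i \<le> cd L (a i) (b i)" using cdle[OF vin[OF i] vne[OF i]] unfolding r_def a_def b_def .
      then have "r i \<le> L / 2" using cd_half[of L "a i" "b i"] by linarith
      moreover have "0 \<le> r i" using metric_sym(2)[OF m vin[OF i] vne[OF i]] unfolding r_def .
      ultimately show "0 \<le> r i \<and> 2 * r i \<le> L" by simp
    qed
    show "\<forall>i<n. \<forall>j<n. i \<noteq> j \<longrightarrow> r i + r j \<le> cd L (a i) (a j) + cd L (b i) (b j)"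
    proof (intro allI impI)
      fix i j assume ij: "i < n" "j < n" "i \<noteq> j"
      have "r i + r j \<le> c (v!i) (v!j) + c (v!(Suc i mod n)) (v!(Suc j mod n))"
      proof -
        have "\<forall>i<length T'. \<forall>j<length T'. i \<noteq> j \<longrightarrow>
          c (T'!i) (T'!((i+1) mod length T')) + c (T'!j) (T'!((j+1) mod length T')) \<le>
          c (T'!i) (T'!j) + c (T'!((i+1) mod length T')) (T'!((j+1) mod length T'))"
          using assms(6) unfolding two_optimal_def Let_def by simp
        then show ?thesis using ij lv unfolding r_def v_def by simp
      qed
      moreover have "v!i \<noteq> v!j" using ij dv(1) lv by (simp add: nth_eq_iff_index_eq)
      moreover have "Suc i mod n \<noteq> Suc j mod n"
        using ij by (auto simp: mod_Suc split: if_splits)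
      then have "v!(Suc i mod n) \<noteq> v!(Suc j mod n)" using ij dv(1) lv n3
        by (simp add: nth_eq_iff_index_eq)
      ultimately show "r i + r j \<le> cd L (a i) (a j) + cd L (b i) (b j)"
        using cdle[OF vin(1)[OF ij(1)] vin(1)[OF ij(2)]] cdle[OF vin(2)[OF ij(1)] vin(2)[OF ij(2)]]
        unfolding a_def b_def by linarith
    qed
  qed
  moreover have S: "tour_length c T' = (\<Sum>i<n. r i)"
    unfolding tour_length_def r_def v_def[symmetric] lv by simp
  moreover have "0 \<le> (\<Sum>i<n. r i)"
  proof (rule sum_nonneg)
    fix i assume "i \<in> {..<n}"
    then have i: "i < n" by simp
    show "0 \<le> r i" using metric_sym(2)[OF m vin[OF i] vne[OF i]] unfolding r_def .
  qed
  ultimately have "tour_length c T' \<le> sqrt (real n / 2) * L"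
    using sqrt_final[OF _ L0 cauchy_sum[where n=n and r=r]] by simp
  then show ?thesis using TL n_def by simp
qed


end
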